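(* Let $\sigma_X=(\sigma_X^0,\sigma_X[\cdot,\cdot])$ be a memory-one strategy for $X$ and $\sigma_Y$ any behavioral strategy for $Y$, generating the measures $\nu_t$. Then for every measurable $E\subseteq S_X$, $$\sum_{t=0}^\infty\lambda^t\int_{S_X\times S_Y}\Big[\mathbf{1}_E(x)-\lambda\,\sigma_X[x,y](E)\Big]\,d\nu_t(x,y)=\sigma_X^0(E).$$
   Context: Standing framework. Let $S_X,S_Y$ be measurable spaces, and $\lambda\in(0,1)$. For $T\ge 0$ let $\mathcal{H}^T=(S_X\times S_Y)^T$ ($\mathcal{H}^0=\{\varnothing\}$) and $\mathcal{H}=\bigsqcup_{T\ge0}\mathcal{H}^T$. A behavioral strategy for $X$ (resp. $Y$) is a Markov kernel from $\mathcal{H}$ to $S_X$ (resp. $S_Y$). A memory-one strategy for $X$ is a behavioral strategy determined by a probability measure $\sigma_X^0$ on $S_X$ (used at the empty history) and a Markov kernel $(x,y)\mapsto\sigma_X[x,y]$ from $S_X\times S_Y$ to $S_X$, with $\sigma_X[h^T]=\sigma_X[x_{T-1},y_{T-1}]$ for $h^T=((x_0,y_0),\dots,(x_{T-1},y_{T-1}))$, $T\ge1$. Given behavioral strategies $\sigma_X,\sigma_Y$, put $\sigma(h)=\sigma_X[h]\otimes\sigma_Y[h]$ and define probability measures $\mu_t$ on $\mathcal{H}^{t+1}$ by $\mu_0=\sigma(\varnothing)$ and $\mu_t(E'\times E)=\int_{E'}\sigma(h)(E)\,d\mu_{t-1}(h)$ (uniquely extended). Let $\nu_t(E)=\mu_t(\mathcal{H}^t\times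 E)$ be the distribution of the action pair at time $t$. $\mathbf{1}_E$ denotes the indicator of $E$. *)

theory Defs
  imports "HOL-Probability.Probability"
begin

text \<open>Histories of length T are functions on {..<T} (PiM), the T-th action pair being h T.
  The disjoint union H is handled by indexing strategies with the history length T.\<close>

definition hist_space :: "'x measure \<Rightarrow> 'y measure \<Rightarrow> nat \<Rightarrow> (nat \<Rightarrow> 'x \<times> 'y) measure" where
  "hist_space MX MY T = PiM {..<T} (\<lambda>_. MX \<Otimes>\<^sub>M MY)"

definition behavioral ::
  "'x measure \<Rightarrow> 'y measure \<Rightarrow> 'a measure \<Rightarrow> (nat \<Rightarrow> (nat \<Rightarrow> 'x \<times> 'y) \<Rightarrow> 'a measure) \<Rightarrow> bool" where
  "behavioral MX MY MA s \<longleftrightarrow> (\<forall>T. s T \<in> hist_space MX MY T \<rightarrow>\<^sub>M prob_algebra MA)"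

definition memory_one ::
  "'x measure \<Rightarrow> 'y measure \<Rightarrow> (nat \<Rightarrow> (nat \<Rightarrow> 'x \<times> 'y) \<Rightarrow> 'x measure)
     \<Rightarrow> 'x measure \<Rightarrow> ('x \<times> 'y \<Rightarrow> 'x measure) \<Rightarrow> bool" where
  "memory_one MX MY s s0 K \<longleftrightarrow>
     s0 \<in> space (prob_algebra MX) \<and>
     K \<in> (MX \<Otimes>\<^sub>M MY) \<rightarrow>\<^sub>M prob_algebra MX \<and>
     (\<forall>h\<in>space (hist_space MX MY 0). s 0 h = s0) \<and>
     (\<forall>T. \<forall>h\<in>space (hist_space MX MY (Suc T)). s (Suc T) h = K (h T))"

primrec play ::
  "'x measure \<Rightarrow> 'y measure \<Rightarrow> (nat \<Rightarrow> (nat \<Rightarrow> 'x \<times> 'y) \<Rightarrow> 'x measure)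
     \<Rightarrow> (nat \<Rightarrow> (nat \<Rightarrow> 'x \<times> 'y) \<Rightarrow> 'y measure) \<Rightarrow> nat \<Rightarrow> (nat \<Rightarrow> 'x \<times> 'y) measure" where
  "play MX MY sX sY 0 =
     distr (sX 0 (\<lambda>_. undefined) \<Otimes>\<^sub>M sY 0 (\<lambda>_. undefined)) (hist_space MX MY 1)
       (\<lambda>a. \<lambda>i\<in>{..<1}. a)"
| "play MX MY sX sY (Suc t) =
     bind (play MX MY sX sY t)
       (\<lambda>h. distr (sX (Suc t) h \<Otimes>\<^sub>M sY (Suc t) h) (hist_space MX MY (Suc (Suc t)))
              (\<lambda>a. h(Suc t := a)))"

definition act_dist ::
  "'x measure \<Rightarrow> 'y measure \<Rightarrow> (nat \<Rightarrow> (nat \<Rightarrow> 'x \<times> 'y) \<Rightarrow> 'x measure)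
     \<Rightarrow> (nat \<Rightarrow> (nat \<Rightarrow> 'x \<times> 'y) \<Rightarrow> 'y measure) \<Rightarrow> nat \<Rightarrow> ('x \<times> 'y) measure" where
  "act_dist MX MY sX sY t = distr (play MX MY sX sY t) (MX \<Otimes>\<^sub>M MY) (\<lambda>h. h t)"

end

theory Submission
  imports Defs
begin

lemma space_hist0: "space (hist_space MX MY 0) = {\<lambda>_. undefined}"
  by (simp add: hist_space_def space_PiM)

lemma memory_one_behavioral:
  assumes "memory_one MX MY sX s0 K"
  shows "behavioral MX MY MX sX"
  unfolding behavioral_def
proof
  fix T show "sX T \<in> hist_space MX MY T \<rightarrow>\<^sub>M prob_algebra MX"
  proof (cases T)
    case 0
    have "(\<lambda>h. s0) \<in> hist_space MX MY T \<rightarrow>\<^sub>M prob_algebra MX"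
      using assms unfolding memory_one_def by (intro measurable_const) auto
    then show ?thesis using assms unfolding memory_one_def 0
      by (subst measurable_cong[where g="\<lambda>h. s0"]) auto
  next
    case (Suc T')
    have K: "K \<in> (MX \<Otimes>\<^sub>M MY) \<rightarrow>\<^sub>M prob_algebra MX" using assms unfolding memory_one_def by auto
    have "(\<lambda>h. K (h T')) \<in> hist_space MX MY T \<rightarrow>\<^sub>M prob_algebra MX"
      unfolding hist_space_def Suc
      by (rule measurable_compose[OF _ K]) (rule measurable_component_singleton, simp)
    then show ?thesis using assms unfolding memory_one_def Suc
      by (subst measurable_cong[where g="\<lambda>h. K (h T')"]) auto
  qed
qed

lemma kernel_meas:
  assumes "behavioral MX MY MX sX" "behavioral MX MY MY sY"
  shows "(\<lambda>h. distr (sX (Suc t) h \<Otimes>\<^sub>M sY (Suc t) h) (hist_space MX MY (Suc (Suc t)))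
              (\<lambda>a. h(Suc t := a))) \<in> hist_space MX MY (Suc t) \<rightarrow>\<^sub>M prob_algebra (hist_space MX MY (Suc (Suc t)))"
proof (rule measurable_distr_prob_space2)
  show "(\<lambda>h. sX (Suc t) h \<Otimes>\<^sub>M sY (Suc t) h) \<in> hist_space MX MY (Suc t) \<rightarrow>\<^sub>M prob_algebra (MX \<Otimes>\<^sub>M MY)"
    using assms unfolding behavioral_def by (intro measurable_pair_prob) auto
  show "(\<lambda>(x, y). x(Suc t := y)) \<in> hist_space MX MY (Suc t) \<Otimes>\<^sub>M (MX \<Otimes>\<^sub>M MY) \<rightarrow>\<^sub>M hist_space MX MY (Suc (Suc t))"
    unfolding hist_space_def
    using measurable_fun_upd[where I="{..<Suc (Suc t)}" and J="{..<Suc t}" and i="Suc t"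
        and f=fst and h=snd and N="PiM {..<Suc t} (\<lambda>_. MX \<Otimes>\<^sub>M MY) \<Otimes>\<^sub>M (MX \<Otimes>\<^sub>M MY)"
        and M="\<lambda>_. MX \<Otimes>\<^sub>M MY"]
    by (auto simp: case_prod_beta lessThan_Suc)
qed

lemma play_in:
  assumes "behavioral MX MY MX sX" "behavioral MX MY MY sY"
  shows "play MX MY sX sY t \<in> space (prob_algebra (hist_space MX MY (Suc t)))"
proof (induction t)
  case 0
  have u: "(\<lambda>_. undefined) \<in> space (hist_space MX MY 0)" by (simp add: space_hist0)
  have a: "sX 0 (\<lambda>_. undefined) \<in> space (prob_algebra MX)"
    using measurable_space[OF assms(1)[unfolded behavioral_def, rule_format, of 0] u] .
  have b: "sY 0 (\<lambda>_. undefined) \<in> space (prob_algebra MY)"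
    using measurable_space[OF assms(2)[unfolded behavioral_def, rule_format, of 0] u] .
  have p: "sX 0 (\<lambda>_. undefined) \<Otimes>\<^sub>M sY 0 (\<lambda>_. undefined) \<in> space (prob_algebra (MX \<Otimes>\<^sub>M MY))"
    using a b by (auto simp: space_prob_algebra intro!: prob_space_pair sets_pair_measure_cong)
  have f: "(\<lambda>a. \<lambda>i\<in>{..<1::nat}. a) \<in> (MX \<Otimes>\<^sub>M MY) \<rightarrow>\<^sub>M hist_space MX MY 1"
    unfolding hist_space_def by (intro measurable_restrict) auto
  show ?case
    using measurable_space[OF measurable_distr_prob_space[OF f] p] by simp
next
  case (Suc t)
  show ?case
    using sets_bind'[OF Suc kernel_meas[OF assms]] prob_space_bind'[OF Suc kernel_meas[OF assms]]
    by (simp add: space_prob_algebra)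
qed

lemma emeasure_Times_prob:
  assumes "prob_space N" "prob_space M" "A \<in> sets N"
  shows "emeasure (N \<Otimes>\<^sub>M M) (A \<times> space M) = emeasure N A"
  using sigma_finite_measure.emeasure_pair_measure_Times[OF prob_space_imp_sigma_finite[OF assms(2)] assms(3), of "space M"]
    prob_space.emeasure_space_1[OF assms(2)] by simp

theorem lemma3:
  fixes MX :: "'x measure" and MY :: "'y measure" and lam :: real
    and sX :: "nat \<Rightarrow> (nat \<Rightarrow> 'x \<times> 'y) \<Rightarrow> 'x measure"
    and sY :: "nat \<Rightarrow> (nat \<Rightarrow> 'x \<times> 'y) \<Rightarrow> 'y measure"
    and s0 :: "'x measure" and K :: "'x \<times> 'y \<Rightarrow> 'x measure" and E :: "'x set"
  assumes "0 < lam" and "lam < 1"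
    and "memory_one MX MY sX s0 K"
    and "behavioral MX MY MY sY"
    and "E \<in> sets MX"
  shows "(\<lambda>t. lam ^ t * (\<integral>p. (indicator E (fst p) - lam * measure (K p) E)
              \<partial>(act_dist MX MY sX sY t))) sums measure s0 E"
proof -
  note mo = assms(3)[unfolded memory_one_def]
  have bX: "behavioral MX MY MX sX" by (rule memory_one_behavioral[OF assms(3)])
  note bY = assms(4)
  have E: "E \<in> sets MX" by fact
  have K[measurable]: "K \<in> (MX \<Otimes>\<^sub>M MY) \<rightarrow>\<^sub>M prob_algebra MX" using mo by auto
  define H where "H = hist_space MX MY"
  define P where "P = play MX MY sX sY"
  define \<nu> where "\<nu> = act_dist MX MY sX sY"
  have Pin: "P t \<in> space (prob_algebra (H (Suc t)))" for t
    unfolding P_def H_def by (rule play_in[OF bX bY])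
  have setsP: "sets (P t) = sets (H (Suc t))" and probP: "prob_space (P t)" for t
    using Pin[of t] by (auto simp: space_prob_algebra)
  have spaceP: "space (P t) = space (H (Suc t))" for t using setsP[of t] by (rule sets_eq_imp_space_eq)
  have projH: "(\<lambda>h. h t) \<in> H (Suc t) \<rightarrow>\<^sub>M MX \<Otimes>\<^sub>M MY" for t
    unfolding H_def hist_space_def by (rule measurable_component_singleton) simp
  have projP: "(\<lambda>h. h t) \<in> P t \<rightarrow>\<^sub>M MX \<Otimes>\<^sub>M MY" for t
    using projH[of t] by (simp add: measurable_cong_sets[OF setsP refl])
  have nu_def': "\<nu> t = distr (P t) (MX \<Otimes>\<^sub>M MY) (\<lambda>h. h t)" for t
    unfolding \<nu>_def P_def act_dist_def by simp
  have probnu: "prob_space (\<nu> t)" for t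
    unfolding nu_def' by (rule prob_space.prob_space_distr[OF probP projP])
  have spacenu: "space (\<nu> t) = space MX \<times> space MY" for t
    unfolding nu_def' by (simp add: space_pair_measure)
  have EY: "E \<times> space MY \<in> sets (MX \<Otimes>\<^sub>M MY)" using E by (intro pair_measureI) auto
  define a where "a t = measure (P t) ((\<lambda>h. h t) -` (E \<times> space MY) \<inter> space (P t))" for t
  define b where "b t = (\<integral>p. measure (K p) E \<partial>\<nu> t)" for t
  have a_bnd: "0 \<le> a t \<and> a t \<le> 1" for t
    unfolding a_def using prob_space.prob_le_1[OF probP] by auto
  have ind_eq: "(\<integral>p. indicator E (fst p) \<partial>\<nu> t) = a t" for t
  proof -
    have "(\<integral>p. indicator E (fst p) \<partial>\<nu> t) = (\<integral>p. indicator (E \<times> space MY) p \<partial>\<nu> t)"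
      by (rule Bochner_Integration.integral_cong) (auto simp: spacenu indicator_def)
    also have "\<dots> = measure (\<nu> t) (E \<times> space MY)"
      using sets.sets_into_space[OF E] by (simp add: spacenu Int_absorb2 Sigma_mono)
    also have "\<dots> = a t"
      unfolding a_def nu_def' by (rule measure_distr[OF projP EY])
    finally show ?thesis .
  qed
  have Kmeas: "(\<lambda>p. measure (K p) E) \<in> borel_measurable (MX \<Otimes>\<^sub>M MY)"
    using E by measurable
  have Kin: "K p \<in> space (prob_algebra MX)" if "p \<in> space (MX \<Otimes>\<^sub>M MY)" for p
    using measurable_space[OF K that] .
  have b_eq: "b t = enn2real (\<integral>\<^sup>+h. emeasure (K (h t)) E \<partial>P t)" for t
  proof -
    have "b t = (\<integral>h. measure (K (h t)) E \<partial>P t)"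
      unfolding b_def nu_def' by (rule integral_distr[OF projP Kmeas])
    also have "\<dots> = enn2real (\<integral>\<^sup>+h. ennreal (measure (K (h t)) E) \<partial>P t)"
      by (rule integral_eq_nn_integral) (auto intro: measurable_compose[OF projP Kmeas])
    also have "(\<integral>\<^sup>+h. ennreal (measure (K (h t)) E) \<partial>P t) = (\<integral>\<^sup>+h. emeasure (K (h t)) E \<partial>P t)"
    proof (rule nn_integral_cong)
      fix h assume "h \<in> space (P t)"
      then have "K (h t) \<in> space (prob_algebra MX)"
        using Kin measurable_space[OF projP] by blast
      then show "ennreal (measure (K (h t)) E) = emeasure (K (h t)) E"
        using E by (auto simp: space_prob_algebra intro!: finite_measure.emeasure_eq_measure[symmetric] prob_space.finite_measure)
    qed
    finally show ?thesis .
  qed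
  have step: "a (Suc t) = b t" for t
  proof -
    define N where "N = (\<lambda>h. distr (sX (Suc t) h \<Otimes>\<^sub>M sY (Suc t) h) (H (Suc (Suc t))) (\<lambda>a. h(Suc t := a)))"
    have Nm: "N \<in> H (Suc t) \<rightarrow>\<^sub>M prob_algebra (H (Suc (Suc t)))"
      unfolding N_def H_def by (rule kernel_meas[OF bX bY])
    have PS: "P (Suc t) = P t \<bind> N" unfolding P_def N_def H_def by simp
    define S where "S = (\<lambda>h. h (Suc t)) -` (E \<times> space MY) \<inter> space (H (Suc (Suc t)))"
    have S: "S \<in> sets (H (Suc (Suc t)))" unfolding S_def using measurable_sets[OF projH EY] .
    have "a (Suc t) = enn2real (emeasure (P (Suc t)) S)"
      by (simp add: a_def S_def measure_def spaceP)
    also have "emeasure (P (Suc t)) S = (\<integral>\<^sup>+h. emeasure (N h) S \<partial>P t)"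
      unfolding PS by (rule emeasure_bind_prob_algebra[OF Pin Nm S])
    also have "\<dots> = (\<integral>\<^sup>+h. emeasure (K (h t)) E \<partial>P t)"
    proof (rule nn_integral_cong)
      fix h assume h: "h \<in> space (P t)"
      then have hH: "h \<in> space (H (Suc t))" by (simp add: spaceP)
      have sXh: "sX (Suc t) h = K (h t)" using mo hH unfolding H_def by auto
      have Kh: "K (h t) \<in> space (prob_algebra MX)" using Kin measurable_space[OF projP h] by blast
      have Yh: "sY (Suc t) h \<in> space (prob_algebra MY)"
        using measurable_space[OF bY[unfolded behavioral_def, rule_format, of "Suc t"]] hH unfolding H_def by blast
      have sets_Q: "sets (K (h t) \<Otimes>\<^sub>M sY (Suc t) h) = sets (MX \<Otimes>\<^sub>M MY)"
        using Kh Yh by (auto simp: space_prob_algebra intro!: sets_pair_measure_cong)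
      have space_Q: "space (K (h t) \<Otimes>\<^sub>M sY (Suc t) h) = space MX \<times> space MY"
        using sets_eq_imp_space_eq[OF sets_Q] by (simp add: space_pair_measure)
      have upd0: "(\<lambda>a. h(Suc t := a)) \<in> (MX \<Otimes>\<^sub>M MY) \<rightarrow>\<^sub>M H (Suc (Suc t))"
        using measurable_fun_upd[where I="{..<Suc (Suc t)}" and J="{..<Suc t}" and i="Suc t"
          and f="\<lambda>_. h" and h="\<lambda>x. x" and N="MX \<Otimes>\<^sub>M MY" and M="\<lambda>_. MX \<Otimes>\<^sub>M MY"] hH
        unfolding H_def hist_space_def by (auto simp: lessThan_Suc)
      have upd: "(\<lambda>a. h(Suc t := a)) \<in> (K (h t) \<Otimes>\<^sub>M sY (Suc t) h) \<rightarrow>\<^sub>M H (Suc (Suc t))"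
        using upd0 by (simp add: measurable_cong_sets[OF sets_Q refl])
      have pre: "(\<lambda>a. h(Suc t := a)) -` S \<inter> space (K (h t) \<Otimes>\<^sub>M sY (Suc t) h) = E \<times> space MY"
        using sets.sets_into_space[OF E] hH unfolding S_def space_Q H_def hist_space_def
        by (auto simp: space_PiM space_pair_measure lessThan_Suc intro!: PiE_fun_upd)
      have "emeasure (N h) S = emeasure (K (h t) \<Otimes>\<^sub>M sY (Suc t) h) (E \<times> space MY)"
        unfolding N_def sXh using emeasure_distr[OF upd S] pre by simp
      also have "\<dots> = emeasure (K (h t)) E"
      proof -
        have "sets (sY (Suc t) h) = sets MY" using Yh by (auto simp: space_prob_algebra)
        then have "space (sY (Suc t) h) = space MY" by (rule sets_eq_imp_space_eq)
        then show ?thesis using emeasure_Times_prob[of "K (h t)" "sY (Suc t) h" E] Kh Yh E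
          by (auto simp: space_prob_algebra)
      qed
      finally show "emeasure (N h) S = emeasure (K (h t)) E" .
    qed
    finally show ?thesis using b_eq by simp
  qed
  have a0: "a 0 = measure s0 E"
  proof -
    have u: "(\<lambda>_. undefined) \<in> space (hist_space MX MY 0)" by (simp add: space_hist0)
    have s0eq: "sX 0 (\<lambda>_. undefined) = s0" using mo u by auto
    define Q where "Q = sY 0 (\<lambda>_. undefined)"
    have Q: "Q \<in> space (prob_algebra MY)"
      unfolding Q_def using measurable_space[OF bY[unfolded behavioral_def, rule_format, of 0] u] .
    have s0: "s0 \<in> space (prob_algebra MX)" using mo by auto
    have P0: "P 0 = distr (s0 \<Otimes>\<^sub>M Q) (H 1) (\<lambda>a. \<lambda>i\<in>{..<1}. a)"
      unfolding P_def H_def Q_def using s0eq by simp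
    have sets_Q: "sets (s0 \<Otimes>\<^sub>M Q) = sets (MX \<Otimes>\<^sub>M MY)"
      using s0 Q by (auto simp: space_prob_algebra intro!: sets_pair_measure_cong)
    have space_Q: "space (s0 \<Otimes>\<^sub>M Q) = space MX \<times> space MY"
      using sets_eq_imp_space_eq[OF sets_Q] by (simp add: space_pair_measure)
    have f0: "(\<lambda>a. \<lambda>i\<in>{..<1::nat}. a) \<in> (MX \<Otimes>\<^sub>M MY) \<rightarrow>\<^sub>M H 1"
      unfolding H_def hist_space_def by (intro measurable_restrict) auto
    have f: "(\<lambda>a. \<lambda>i\<in>{..<1::nat}. a) \<in> (s0 \<Otimes>\<^sub>M Q) \<rightarrow>\<^sub>M H 1"
      using f0 by (simp add: measurable_cong_sets[OF sets_Q refl])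
    define S where "S = (\<lambda>h. h 0) -` (E \<times> space MY) \<inter> space (H 1)"
    have S: "S \<in> sets (H 1)" unfolding S_def using measurable_sets[OF projH[of 0] EY] by simp
    have "a 0 = measure (P 0) S" by (simp add: a_def S_def spaceP)
    also have "\<dots> = measure (s0 \<Otimes>\<^sub>M Q) ((\<lambda>a. \<lambda>i\<in>{..<1::nat}. a) -` S \<inter> space (s0 \<Otimes>\<^sub>M Q))"
      unfolding P0 by (rule measure_distr[OF f S])
    also have "(\<lambda>a. \<lambda>i\<in>{..<1::nat}. a) -` S \<inter> space (s0 \<Otimes>\<^sub>M Q) = E \<times> space MY"
      using sets.sets_into_space[OF E] unfolding S_def space_Q H_def hist_space_def
      by (auto simp: space_PiM space_pair_measure)
    also have "measure (s0 \<Otimes>\<^sub>M Q) (E \<times> space MY) = measure s0 E"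
    proof -
      have "sets Q = sets MY" using Q by (auto simp: space_prob_algebra)
      then have "space Q = space MY" by (rule sets_eq_imp_space_eq)
      then show ?thesis using emeasure_Times_prob[of s0 Q E] s0 Q E
        by (auto simp: space_prob_algebra measure_def)
    qed
    finally show ?thesis .
  qed
  have nusets: "borel_measurable (\<nu> t) = borel_measurable (MX \<Otimes>\<^sub>M MY)" for t
    unfolding nu_def' by (rule measurable_cong_sets[OF sets_distr refl])
  have integ_ind: "integrable (\<nu> t) (\<lambda>p. indicator E (fst p) :: real)" for t
  proof (rule finite_measure.integrable_const_bound[OF prob_space.finite_measure[OF probnu], where B=1])
    show "AE x in \<nu> t. norm (indicator E (fst x) :: real) \<le> 1" by (auto simp: indicator_def)
    show "(\<lambda>p. indicator E (fst p) :: real) \<in> borel_measurable (\<nu> t)"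
      unfolding nusets using E by measurable
  qed
  have integ_K: "integrable (\<nu> t) (\<lambda>p. lam * measure (K p) E)" for t
  proof (rule finite_measure.integrable_const_bound[OF prob_space.finite_measure[OF probnu], where B=lam])
    show "AE x in \<nu> t. norm (lam * measure (K x) E) \<le> lam"
    proof (rule AE_I2)
      fix x assume "x \<in> space (\<nu> t)"
      then have "K x \<in> space (prob_algebra MX)" using Kin by (simp add: spacenu space_pair_measure)
      then have "measure (K x) E \<le> 1" by (auto simp: space_prob_algebra intro: prob_space.prob_le_1)
      then show "norm (lam * measure (K x) E) \<le> lam"
        using assms(1) by (simp add: abs_mult mult_le_cancel_left1)
    qed
    show "(\<lambda>p. lam * measure (K p) E) \<in> borel_measurable (\<nu> t)"
      unfolding nusets using Kmeas by measurable
  qed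
  have termeq: "lam ^ t * (\<integral>p. (indicator E (fst p) - lam * measure (K p) E) \<partial>\<nu> t)
      = lam ^ t * a t - lam ^ Suc t * a (Suc t)" for t
  proof -
    have I: "(\<integral>p. (indicator E (fst p) - lam * measure (K p) E) \<partial>\<nu> t) = a t - lam * b t"
      using Bochner_Integration.integral_diff[OF integ_ind integ_K, of t]
      by (simp add: ind_eq b_def[symmetric])
    show ?thesis unfolding I step by (simp add: algebra_simps)
  qed
  have lim: "(\<lambda>t. lam ^ t * a t) \<longlonglongrightarrow> 0"
  proof (rule Lim_null_comparison)
    show "\<forall>\<^sub>F t in sequentially. norm (lam ^ t * a t) \<le> lam ^ t"
      using a_bnd assms(1) by (auto simp: abs_mult intro!: always_eventually mult_left_le)
    show "(\<lambda>t. lam ^ t) \<longlonglongrightarrow> 0" using assms by (intro LIMSEQ_power_zero) auto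
  qed
  have "(\<lambda>t. lam ^ t * a t - lam ^ Suc t * a (Suc t)) sums (lam ^ 0 * a 0 - 0)"
    by (rule telescope_sums'[OF lim])
  then show ?thesis using termeq a0 by (simp add: \<nu>_def)
qed

end
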